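(* Let $\mathcal{A}$, $\mathcal{B}$ be C$^\ast$-algebras and $\phi\colon\mathcal{A}\to\mathcal{B}$ a $\delta$-self-adjoint bounded linear map. Then there exists a self-adjoint bounded linear map $\psi\colon\mathcal{A}\to\mathcal{B}$ (i.e. $\psi(x^\ast)=\psi(x)^\ast$) with $\|\phi-\psi\|\le\frac12\delta$. Moreover, if $\phi$ is $\varepsilon$-order zero, then $\psi$ can be chosen to be $(\varepsilon+\frac12\delta\|\phi\|)$-order zero.
   Context: $\phi$ is $\delta$-self-adjoint if $\|\phi(x^\ast)-\phi(x)^\ast\|\le\delta\|x\|$ for all $x$. $x\perp y$ means $xy=yx=x^\ast y=xy^\ast=0$; $\phi$ is $\varepsilon$-order zero if $\|\phi(x)\phi(y)\|\le\varepsilon\|x\|\|y\|$ for all positive $x,y$ with $x\perp y$. *)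

theory Defs
  imports "HOL-Analysis.Analysis"
begin

text \<open>Complex scalar
  multiplication is a new class parameter compatible with the real one.\<close>

class cstar_algebra = real_normed_algebra + banach +
  fixes scaleC :: "complex \<Rightarrow> 'a \<Rightarrow> 'a"
    and cstar :: "'a \<Rightarrow> 'a"
  assumes scaleC_add_right: "scaleC a (x + y) = scaleC a x + scaleC a y"
    and scaleC_add_left: "scaleC (a + b) x = scaleC a x + scaleC b x"
    and scaleC_scaleC: "scaleC a (scaleC b x) = scaleC (a * b) x"
    and scaleC_one: "scaleC 1 x = x"
    and scaleR_scaleC: "scaleR r x = scaleC (complex_of_real r) x"
    and norm_scaleC: "norm (scaleC a x) = cmod a * norm x"
    and scaleC_mult_left: "scaleC a x * y = scaleC a (x * y)"
    and scaleC_mult_right: "x * scaleC a y = scaleC a (x * y)"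
    and cstar_cstar: "cstar (cstar x) = x"
    and cstar_add: "cstar (x + y) = cstar x + cstar y"
    and cstar_scaleC: "cstar (scaleC a x) = scaleC (cnj a) (cstar x)"
    and cstar_mult: "cstar (x * y) = cstar y * cstar x"
    and cstar_identity: "norm (cstar x * x) = (norm x)\<^sup>2"

definition clinear :: "('a::cstar_algebra \<Rightarrow> 'b::cstar_algebra) \<Rightarrow> bool" where
  "clinear f \<longleftrightarrow> (\<forall>x y. f (x + y) = f x + f y) \<and> (\<forall>c x. f (scaleC c x) = scaleC c (f x))"

definition bounded_clinear_map :: "('a::cstar_algebra \<Rightarrow> 'b::cstar_algebra) \<Rightarrow> bool" where
  "bounded_clinear_map f \<longleftrightarrow> clinear f \<and> (\<exists>K. \<forall>x. norm (f x) \<le> K * norm x)"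

definition cpositive :: "'a::cstar_algebra \<Rightarrow> bool" where
  "cpositive x \<longleftrightarrow> (\<exists>y. x = cstar y * y)"

definition orth :: "'a::cstar_algebra \<Rightarrow> 'a \<Rightarrow> bool" where
  "orth x y \<longleftrightarrow> x * y = 0 \<and> y * x = 0 \<and> cstar x * y = 0 \<and> x * cstar y = 0"

definition delta_self_adjoint :: "real \<Rightarrow> ('a::cstar_algebra \<Rightarrow> 'b::cstar_algebra) \<Rightarrow> bool" where
  "delta_self_adjoint \<delta> \<phi> \<longleftrightarrow> (\<forall>x. norm (\<phi> (cstar x) - cstar (\<phi> x)) \<le> \<delta> * norm x)"

definition self_adjoint_map :: "('a::cstar_algebra \<Rightarrow> 'b::cstar_algebra) \<Rightarrow> bool" where
  "self_adjoint_map \<psi> \<longleftrightarrow> (\<forall>x. \<psi> (cstar x) = cstar (\<psi> x))"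

definition eps_order_zero :: "real \<Rightarrow> ('a::cstar_algebra \<Rightarrow> 'b::cstar_algebra) \<Rightarrow> bool" where
  "eps_order_zero \<epsilon> \<phi> \<longleftrightarrow> (\<forall>x y. cpositive x \<longrightarrow> cpositive y \<longrightarrow> orth x y \<longrightarrow>
      norm (\<phi> x * \<phi> y) \<le> \<epsilon> * norm x * norm y)"

end

theory Submission
  imports Defs
begin

lemma cstar_zero: "cstar (0::'a::cstar_algebra) = 0"
  by (metis add_cancel_right_right cstar_add)

lemma cstar_minus: "cstar (- (x::'a::cstar_algebra)) = - cstar x"
  by (metis add_eq_0_iff cstar_add cstar_zero neg_eq_iff_add_eq_0)

lemma cstar_diff: "cstar ((x::'a::cstar_algebra) - y) = cstar x - cstar y"
  by (simp only: diff_conv_add_uminus cstar_add cstar_minus)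

lemma cstar_scaleR: "cstar (scaleR r (x::'a::cstar_algebra)) = scaleR r (cstar x)"
  by (simp add: scaleR_scaleC cstar_scaleC)

lemma norm_cstar_le: "norm (cstar (x::'a::cstar_algebra)) \<le> norm x"
proof (cases "cstar x = 0")
  case True then show ?thesis by simp
next
  case False
  have "(norm (cstar x))\<^sup>2 = norm (cstar (cstar x) * cstar x)" by (rule cstar_identity[symmetric])
  also have "\<dots> \<le> norm x * norm (cstar x)" by (simp add: cstar_cstar norm_mult_ineq)
  finally have "norm (cstar x) * norm (cstar x) \<le> norm x * norm (cstar x)"
    by (simp add: power2_eq_square)
  then show ?thesis using False by simp
qed

lemma norm_cstar: "norm (cstar (x::'a::cstar_algebra)) = norm x"
  by (metis antisym norm_cstar_le cstar_cstar)

lemma pos_sa: "cpositive (x::'a::cstar_algebra) \<Longrightarrow> cstar x = x"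
  unfolding cpositive_def by (auto simp: cstar_mult cstar_cstar)

lemma bl_of_bc:
  assumes "bounded_clinear_map (f::'a::cstar_algebra \<Rightarrow> 'b::cstar_algebra)"
  shows "bounded_linear f"
proof -
  from assms obtain K where K: "\<And>x. norm (f x) \<le> K * norm x" and
    add: "\<And>x y. f (x + y) = f x + f y" and sc: "\<And>c x. f (scaleC c x) = scaleC c (f x)"
    unfolding bounded_clinear_map_def clinear_def by blast
  show ?thesis
  proof
    show "f (x + y) = f x + f y" for x y by (rule add)
    show "f (scaleR r x) = scaleR r (f x)" for r x by (simp add: scaleR_scaleC sc)
    show "\<exists>K. \<forall>x. norm (f x) \<le> norm x * K" using K by (metis mult.commute)
  qed
qed

theorem lemma2p3:
  fixes \<phi> :: "'a::cstar_algebra \<Rightarrow> 'b::cstar_algebra" and \<delta> :: real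
  assumes "0 \<le> \<delta>"
    and "bounded_clinear_map \<phi>"
    and "delta_self_adjoint \<delta> \<phi>"
  shows "(\<exists>\<psi>. bounded_clinear_map \<psi> \<and> self_adjoint_map \<psi> \<and>
            onorm (\<lambda>x. \<phi> x - \<psi> x) \<le> \<delta> / 2)
       \<and> (\<forall>\<epsilon>. eps_order_zero \<epsilon> \<phi> \<longrightarrow>
            (\<exists>\<psi>. bounded_clinear_map \<psi> \<and> self_adjoint_map \<psi> \<and>
              onorm (\<lambda>x. \<phi> x - \<psi> x) \<le> \<delta> / 2 \<and>
              eps_order_zero (\<epsilon> + \<delta> / 2 * onorm \<phi>) \<psi>))"
proof -
  from assms(2) obtain K where K: "\<And>x. norm (\<phi> x) \<le> K * norm x" and
    add: "\<And>x y. \<phi> (x + y) = \<phi> x + \<phi> y" and sc: "\<And>c x. \<phi> (scaleC c x) = scaleC c (\<phi> x)"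
    unfolding bounded_clinear_map_def clinear_def by blast
  have bl: "bounded_linear \<phi>" by (rule bl_of_bc[OF assms(2)])
  have dsa: "\<And>x. norm (\<phi> (cstar x) - cstar (\<phi> x)) \<le> \<delta> * norm x"
    using assms(3) unfolding delta_self_adjoint_def by blast
  define \<psi> where "\<psi> x = scaleR (1/2) (\<phi> x + cstar (\<phi> (cstar x)))" for x
  have bc: "bounded_clinear_map \<psi>"
    unfolding bounded_clinear_map_def clinear_def
  proof (intro conjI allI)
    show "\<psi> (x + y) = \<psi> x + \<psi> y" for x y
      by (simp add: \<psi>_def add cstar_add scaleR_add_right algebra_simps)
    show "\<psi> (scaleC c x) = scaleC c (\<psi> x)" for c x
      by (simp add: \<psi>_def sc cstar_scaleC cstar_cstar scaleR_scaleC scaleC_scaleC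
          scaleC_add_right mult.commute)
    show "\<exists>K. \<forall>x. norm (\<psi> x) \<le> K * norm x"
    proof (intro exI allI)
      fix x
      have "norm (\<psi> x) = (1/2) * norm (\<phi> x + cstar (\<phi> (cstar x)))" by (simp add: \<psi>_def)
      also have "\<dots> \<le> (1/2) * (norm (\<phi> x) + norm (\<phi> (cstar x)))"
        using norm_triangle_ineq[of "\<phi> x" "cstar (\<phi> (cstar x))"] by (simp add: norm_cstar)
      also have "\<dots> \<le> (1/2) * (K * norm x + K * norm x)"
        using K[of x] K[of "cstar x"] by (simp add: norm_cstar)
      finally show "norm (\<psi> x) \<le> K * norm x" by simp
    qed
  qed
  have sa: "self_adjoint_map \<psi>"
    unfolding self_adjoint_map_def \<psi>_def
    by (simp add: cstar_scaleR cstar_add cstar_cstar add.commute)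
  have on: "onorm (\<lambda>x. \<phi> x - \<psi> x) \<le> \<delta> / 2"
  proof (rule onorm_bound)
    show "0 \<le> \<delta> / 2" using assms(1) by simp
    fix x
    have hh: "\<phi> x = scaleR (1/2) (\<phi> x) + scaleR (1/2) (\<phi> x)"
      by (simp flip: scaleR_add_left)
    have "\<phi> x - \<psi> x = scaleR (1/2) (cstar (cstar (\<phi> x) - \<phi> (cstar x)))"
      by (subst hh, simp add: \<psi>_def cstar_diff cstar_cstar scaleR_diff_right algebra_simps)
    then have "norm (\<phi> x - \<psi> x) = (1/2) * norm (\<phi> (cstar x) - cstar (\<phi> x))"
      by (simp add: norm_cstar norm_minus_commute)
    also have "\<dots> \<le> (1/2) * (\<delta> * norm x)" using dsa[of x] by simp
    finally show "norm (\<phi> x - \<psi> x) \<le> \<delta> / 2 * norm x" by simp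
  qed
  have oz: "eps_order_zero (\<epsilon> + \<delta> / 2 * onorm \<phi>) \<psi>" if ez: "eps_order_zero \<epsilon> \<phi>" for \<epsilon>
    unfolding eps_order_zero_def
  proof (intro allI impI)
    fix x y :: 'a
    assume px: "cpositive x" and py: "cpositive y" and o: "orth x y"
    have sx: "cstar x = x" and sy: "cstar y = y" using px py pos_sa by auto
    have oyx: "orth y x" using o unfolding orth_def sx sy by simp
    have e1: "norm (\<phi> x * \<phi> y) \<le> \<epsilon> * norm x * norm y"
      using ez px py o unfolding eps_order_zero_def by blast
    have e2: "norm (\<phi> y * \<phi> x) \<le> \<epsilon> * norm y * norm x"
      using ez px py oyx unfolding eps_order_zero_def by blast
    have dx: "norm (cstar (\<phi> x) - \<phi> x) \<le> \<delta> * norm x"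
      using dsa[of x] by (simp add: sx norm_minus_commute)
    have dy: "norm (cstar (\<phi> y) - \<phi> y) \<le> \<delta> * norm y"
      using dsa[of y] by (simp add: sy norm_minus_commute)
    have nx: "norm (\<phi> x) \<le> onorm \<phi> * norm x" and ny: "norm (\<phi> y) \<le> onorm \<phi> * norm y"
      using onorm[OF bl] by auto
    have onn: "0 \<le> onorm \<phi>" using onorm_pos_le[OF bl] .
    define a where "a = \<phi> x" define b where "b = \<phi> y"
    have psx: "\<psi> x = scaleR (1/2) (a + cstar a)" by (simp add: \<psi>_def sx a_def)
    have psy: "\<psi> y = scaleR (1/2) (b + cstar b)" by (simp add: \<psi>_def sy b_def)
    have eq: "\<psi> x * \<psi> y = scaleR (1/4) (a * b + a * b + a * b + a * (cstar b - b)
              + (cstar a - a) * b + cstar (b * a))"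
    proof -
      have "\<psi> x * \<psi> y = scaleR (1/2) (a + cstar a) * scaleR (1/2) (b + cstar b)"
        by (simp add: psx psy)
      also have "\<dots> = scaleR (1/4) ((a + cstar a) * (b + cstar b))"
        by (simp add: mult_scaleR_left mult_scaleR_right)
      also have "(a + cstar a) * (b + cstar b) = a * b + a * b + a * b + a * (cstar b - b)
              + (cstar a - a) * b + cstar (b * a)"
        by (simp add: cstar_mult algebra_simps)
      finally show ?thesis .
    qed
    have t1: "norm (a * (cstar b - b)) \<le> onorm \<phi> * norm x * (\<delta> * norm y)"
    proof -
      have "norm (a * (cstar b - b)) \<le> norm a * norm (cstar b - b)" by (rule norm_mult_ineq)
      also have "\<dots> \<le> onorm \<phi> * norm x * (\<delta> * norm y)"
        using mult_mono[OF nx dy] onn a_def b_def by simp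
      finally show ?thesis .
    qed
    have t2: "norm ((cstar a - a) * b) \<le> (\<delta> * norm x) * (onorm \<phi> * norm y)"
    proof -
      have "norm ((cstar a - a) * b) \<le> norm (cstar a - a) * norm b" by (rule norm_mult_ineq)
      also have "\<dots> \<le> (\<delta> * norm x) * (onorm \<phi> * norm y)"
        using mult_mono[OF dx ny] assms(1) a_def b_def by simp
      finally show ?thesis .
    qed
    have t3: "norm (cstar (b * a)) \<le> \<epsilon> * norm x * norm y"
      using e2 by (simp add: norm_cstar a_def b_def mult.commute mult.left_commute)
    have e1': "norm (a * b) \<le> \<epsilon> * norm x * norm y" using e1 a_def b_def by simp
    have "norm (\<psi> x * \<psi> y) \<le> (1/4) * (norm (a*b) + norm (a*b) + norm (a*b) + norm (a * (cstar b - b))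
              + norm ((cstar a - a) * b) + norm (cstar (b * a)))"
      unfolding eq
      by (simp, smt (verit) norm_triangle_ineq)
    also have "\<dots> \<le> (1/4) * (4 * (\<epsilon> * norm x * norm y) + 2 * (\<delta> * onorm \<phi> * norm x * norm y))"
      using t1 t2 t3 e1' by (simp add: algebra_simps)
    also have "\<dots> = (\<epsilon> + \<delta> / 2 * onorm \<phi>) * norm x * norm y" by (simp add: algebra_simps)
    finally show "norm (\<psi> x * \<psi> y) \<le> (\<epsilon> + \<delta> / 2 * onorm \<phi>) * norm x * norm y" .
  qed
  show ?thesis using bc sa on oz by blast
qed

end
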